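(* Let $h_1,h_2,g_1,g_2>0$ be real numbers. For $\Delta_1,\Delta_2>0$ and $\Omega\subseteq\{1,2\}$ define (all logarithms base $2$, $[x]^+=\max\{x,0\}$) \begin{align*} R(\emptyset;\Delta_1,\Delta_2)&=\Big[\log\Big(1+\tfrac{h_1^2}{1+\Delta_1}+\tfrac{h_2^2}{1+\Delta_2}\Big)\Big]^+,\\ R(\{1\};\Delta_1,\Delta_2)&=\Big[\log(1+g_1^2)+\log\Big(1+\tfrac{h_2^2}{1+\Delta_2}\Big)-\log\tfrac{1+\Delta_1}{\Delta_1}\Big]^+,\\ R(\{2\};\Delta_1,\Delta_2)&=\Big[\log(1+g_2^2)+\log\Big(1+\tfrac{h_1^2}{1+\Delta_1}\Big)-\log\tfrac{1+\Delta_2}{\Delta_2}\Big]^+,\\ R(\{1,2\};\Delta_1,\Delta_2)&=\Big[\log(1+g_1^2+g_2^2)-\log\tfrac{1+\Delta_1}{\Delta_1}-\log\tfrac{1+\Delta_2}{\Delta_2}\Big]^+. \end{align*} Let $$\delta_1:=\frac{(1+g_1^2+g_2^2)(1+h_1^2+h_2^2)+(1+g_2^2)h_1^2h_2^2}{g_2^2(1+g_1^2+g_2^2)(1+h_1^2)},\qquad \delta_2:=\frac{(1+g_1^2)(1+h_2^2)}{g_2^2},$$ and $\mathcal I_1=(0,\delta_1)$, $\mathcal I_2=[\delta_1,\delta_2)$, $\mathcal I_3=[\delta_2,\infty)$. Then $0<\delta_1<\delta_2$ (so the three intervals are nonempty), and for fixed $\Delta_2>0$, the optimizing $\Delta_1^*$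 of the max-min problem $\max_{\Delta_1>0}\min_{\Omega\subseteq\{1,2\}}R(\Omega;\Delta_1,\Delta_2)$ and the minimizing cut $\Omega^*$ at this optimum are: \begin{itemize} \item if $\Delta_2\in\mathcal I_1$: $\Delta_1^*=\frac{(1+g_2^2)(1+h_1^2)}{g_1^2}$, and $\Omega^*=\{1,2\}$ or $\{2\}$; \item if $\Delta_2\in\mathcal I_2$: $\Delta_1^*=\frac{(1+h_1^2)\Delta_2+(1+h_1^2+h_2^2)}{(g_1^2+g_2^2)\Delta_2-(1+h_2^2)}$, and $\Omega^*=\{1,2\}$ or $\emptyset$; \item if $\Delta_2\in\mathcal I_3$: $\Delta_1^*=\frac{(1+h_1^2)\Delta_2+(1+h_1^2+h_2^2)}{g_1^2(\Delta_2+(1+h_2^2))}$, and $\Omega^*=\{1\}$ or $\emptyset$. \end{itemize}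
   Context: This concerns the full-duplex two-relay Gaussian diamond network: source $S$, relays $A_1,A_2$, destination $D$, with channel magnitudes $h_i$ ($S\to A_i$) and $g_i$ ($A_i\to D$). Relay $i$ uses a Gaussian vector quantizer with distortion $\Delta_i$ (quantized signal $\hat Y_i=Y_i+\hat Z_i$, $\hat Z_i\sim\mathcal{CN}(0,\Delta_i)$), and $R(\Omega;\Delta_1,\Delta_2)$ is the resulting quantize-map-and-forward rate expression for the cut $\Omega$ (the QMF achievable rate is $\min_\Omega R(\Omega;\Delta_1,\Delta_2)$). *)

theory Defs
  imports Complex_Main
begin

definition pos_part :: "real \<Rightarrow> real" where
  "pos_part x = max x 0"

text \<open>QMF cut rate R(Omega; D1, D2) for the two-relay diamond network with channel
  gains h1 h2 g1 g2; cuts are subsets of {1,2}; logarithms base 2.\<close>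
definition qmf_R :: "real \<Rightarrow> real \<Rightarrow> real \<Rightarrow> real \<Rightarrow> nat set \<Rightarrow> real \<Rightarrow> real \<Rightarrow> real" where
  "qmf_R h1 h2 g1 g2 \<Omega> D1 D2 =
     (if \<Omega> = {} then pos_part (log 2 (1 + h1\<^sup>2 / (1 + D1) + h2\<^sup>2 / (1 + D2)))
      else if \<Omega> = {1} then pos_part (log 2 (1 + g1\<^sup>2) + log 2 (1 + h2\<^sup>2 / (1 + D2))
                                     - log 2 ((1 + D1) / D1))
      else if \<Omega> = {2} then pos_part (log 2 (1 + g2\<^sup>2) + log 2 (1 + h1\<^sup>2 / (1 + D1))
                                     - log 2 ((1 + D2) / D2))
      else pos_part (log 2 (1 + g1\<^sup>2 + g2\<^sup>2) - log 2 ((1 + D1) / D1) - log 2 ((1 + D2) / D2)))"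

definition qmf_minR :: "real \<Rightarrow> real \<Rightarrow> real \<Rightarrow> real \<Rightarrow> real \<Rightarrow> real \<Rightarrow> real" where
  "qmf_minR h1 h2 g1 g2 D1 D2 = Min ((\<lambda>\<Omega>. qmf_R h1 h2 g1 g2 \<Omega> D1 D2) ` Pow {1,2})"

definition qmf_opt :: "real \<Rightarrow> real \<Rightarrow> real \<Rightarrow> real \<Rightarrow> real \<Rightarrow> real \<Rightarrow> nat set set \<Rightarrow> bool" where
  "qmf_opt h1 h2 g1 g2 D2 D1s C \<longleftrightarrow>
     D1s > 0 \<and>
     (\<forall>D1>0. qmf_minR h1 h2 g1 g2 D1 D2 \<le> qmf_minR h1 h2 g1 g2 D1s D2) \<and>
     (\<forall>\<Omega>\<in>C. qmf_R h1 h2 g1 g2 \<Omega> D1s D2 = qmf_minR h1 h2 g1 g2 D1s D2)"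

end

theory Submission
  imports Defs
begin

definition "L t = pos_part (log 2 t)"
definition "F0 a b x y = 1 + a/(1+x) + b/(1+(y::real))"
definition "F1 b c x y = (1+c)*(1+b/(1+y))*(x/(1+(x::real)))"
definition "F2 a d x y = (1+d)*(1+a/(1+x))*(y/(1+(y::real)))"
definition "F12 c d x y = (1+c+d)*(x/(1+x))*(y/(1+(y::real)))"

lemma L_mono: "0 < t \<Longrightarrow> t \<le> s \<Longrightarrow> L t \<le> L s"
  unfolding L_def pos_part_def by (simp add: max.coboundedI1 max_def)

lemma R_eq:
  assumes "x > 0" "y > 0"
  shows "qmf_R h1 h2 g1 g2 {} x y = L (F0 (h1^2) (h2^2) x y)"
    and "qmf_R h1 h2 g1 g2 {1} x y = L (F1 (h2^2) (g1^2) x y)"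
    and "qmf_R h1 h2 g1 g2 {2} x y = L (F2 (h1^2) (g2^2) x y)"
    and "qmf_R h1 h2 g1 g2 {1,2} x y = L (F12 (g1^2) (g2^2) x y)"
proof -
  have p1: "0 < 1 + h2\<^sup>2 / (1 + y)" "0 < 1 + h1\<^sup>2 / (1 + x)" using assms
    by (auto intro!: add_pos_nonneg)
  have p2: "0 < (1+x)/x" "0 < (1+y)/y" "0 < 1 + g1^2" "0 < 1+g2^2" "0 < 1 + g1^2 + g2^2"
    using assms by (auto simp: add_pos_nonneg)
  show "qmf_R h1 h2 g1 g2 {} x y = L (F0 (h1^2) (h2^2) x y)"
    by (simp add: qmf_R_def L_def F0_def)
  show "qmf_R h1 h2 g1 g2 {1} x y = L (F1 (h2^2) (g1^2) x y)"
    using assms p1 p2 by (simp add: qmf_R_def L_def F1_def log_mult log_divide) (simp add: algebra_simps)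
  show "qmf_R h1 h2 g1 g2 {2} x y = L (F2 (h1^2) (g2^2) x y)"
    using assms p1 p2 by (simp add: qmf_R_def L_def F2_def log_mult log_divide) (simp add: algebra_simps)
  show "qmf_R h1 h2 g1 g2 {1,2} x y = L (F12 (g1^2) (g2^2) x y)"
    using assms p1 p2 by (simp add: qmf_R_def L_def F12_def log_mult log_divide) (simp add: algebra_simps)
qed

lemma minR_eq:
  assumes "x > 0" "y > 0"
  shows "qmf_minR h1 h2 g1 g2 x y = min (min (L (F0 (h1^2) (h2^2) x y)) (L (F1 (h2^2) (g1^2) x y)))
            (min (L (F2 (h1^2) (g2^2) x y)) (L (F12 (g1^2) (g2^2) x y)))"
proof -
  have "Pow {1,2::nat} = {{},{1},{2},{1,2}}" by (auto simp: Pow_insert)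
  then show ?thesis unfolding qmf_minR_def using R_eq[OF assms, of h1 h2 g1 g2]
    by (simp add: min.assoc min.commute min.left_commute)
qed

lemma F_pos:
  fixes a b c d x y :: real
  assumes "a \<ge> 0" "b \<ge> 0" "c \<ge> 0" "d \<ge> 0" "x > 0" "y > 0"
  shows "F0 a b x y > 0" "F1 b c x y > 0" "F2 a d x y > 0" "F12 c d x y > 0"
  using assms by (auto simp: F0_def F1_def F2_def F12_def intro!: add_pos_nonneg mult_pos_pos divide_pos_pos)

lemma frac_mono: "0 < (x::real) \<Longrightarrow> x \<le> x' \<Longrightarrow> x/(1+x) \<le> x'/(1+x')"
  by (simp add: divide_simps) (simp add: algebra_simps)

lemma inv_mono: "0 < (x::real) \<Longrightarrow> x \<le> x' \<Longrightarrow> a \<ge> 0 \<Longrightarrow> a/(1+x') \<le> a/(1+x)"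
  by (simp add: divide_left_mono)

lemma F_mono:
  fixes a b c d x x' y :: real
  assumes "a \<ge> 0" "b \<ge> 0" "c \<ge> 0" "d \<ge> 0" "x > 0" "y > 0" "x \<le> x'"
  shows "F1 b c x y \<le> F1 b c x' y" "F12 c d x y \<le> F12 c d x' y"
        "F0 a b x' y \<le> F0 a b x y" "F2 a d x' y \<le> F2 a d x y"
proof -
  have fm: "x/(1+x) \<le> x'/(1+x')" using frac_mono assms by blast
  have im: "a/(1+x') \<le> a/(1+x)" using inv_mono assms by blast
  have p1: "0 \<le> (1+c)*(1+b/(1+y))" using assms by simp
  have p2: "0 \<le> y/(1+y)" using assms by simp
  show "F1 b c x y \<le> F1 b c x' y" unfolding F1_def using mult_left_mono[OF fm p1] by (simp add: mult.assoc)
  show "F12 c d x y \<le> F12 c d x' y" unfolding F12_def using assms fm p2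
    by (intro mult_right_mono mult_left_mono) auto
  show "F0 a b x' y \<le> F0 a b x y" unfolding F0_def using im by simp
  show "F2 a d x' y \<le> F2 a d x y" unfolding F2_def using assms im p2
    by (intro mult_right_mono mult_left_mono) auto
qed

lemma F_mult:
  fixes a b c d x y :: real
  assumes "x > 0" "y > 0"
  shows "F2 a d x y * ((1+x)*(1+y)) = (1+d)*(1+x+a)*y"
    and "F0 a b x y * ((1+x)*(1+y)) = (1+x)*(1+y)+a*(1+y)+b*(1+x)"
    and "F1 b c x y * ((1+x)*(1+y)) = (1+c)*(1+y+b)*x"
    and "F12 c d x y * ((1+x)*(1+y)) = (1+c+d)*x*y"
proof -
  have "1+x \<noteq> 0" "1+y \<noteq> 0" "1 + (x + (y + x*y)) \<noteq> 0" using assms mult_pos_pos[OF assms] by linarith+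
  then show "F2 a d x y * ((1+x)*(1+y)) = (1+d)*(1+x+a)*y"
    and "F0 a b x y * ((1+x)*(1+y)) = (1+x)*(1+y)+a*(1+y)+b*(1+x)"
    and "F1 b c x y * ((1+x)*(1+y)) = (1+c)*(1+y+b)*x"
    and "F12 c d x y * ((1+x)*(1+y)) = (1+c+d)*x*y"
    by (simp_all add: F0_def F1_def F2_def F12_def field_simps)
qed

lemma F_cmp:
  fixes a b c d x y :: real
  assumes "x > 0" "y > 0"
  shows "(1+x+a)*(d*y-1) - b*(1+x) \<le> 0 \<Longrightarrow> F2 a d x y \<le> F0 a b x y"
    and "(1+x+a)*(d*y-1) - b*(1+x) \<ge> 0 \<Longrightarrow> F0 a b x y \<le> F2 a d x y"
    and "d*y \<le> (1+c)*(1+b) \<Longrightarrow> F12 c d x y \<le> F1 b c x y"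
    and "d*y \<ge> (1+c)*(1+b) \<Longrightarrow> F1 b c x y \<le> F12 c d x y"
proof -
  have P: "(1+x)*(1+y) > 0" using assms by simp
  note e = F_mult[OF assms]
  show "(1+x+a)*(d*y-1) - b*(1+x) \<le> 0 \<Longrightarrow> F2 a d x y \<le> F0 a b x y"
  proof -
    assume h: "(1+x+a)*(d*y-1) - b*(1+x) \<le> 0"
    have "F2 a d x y * ((1+x)*(1+y)) \<le> F0 a b x y * ((1+x)*(1+y))"
      unfolding e using h by (simp add: algebra_simps)
    then show ?thesis using P by (rule mult_right_le_imp_le)
  qed
  show "(1+x+a)*(d*y-1) - b*(1+x) \<ge> 0 \<Longrightarrow> F0 a b x y \<le> F2 a d x y"
  proof -
    assume h: "(1+x+a)*(d*y-1) - b*(1+x) \<ge> 0"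
    have "F0 a b x y * ((1+x)*(1+y)) \<le> F2 a d x y * ((1+x)*(1+y))"
      unfolding e using h by (simp add: algebra_simps)
    then show ?thesis using P by (rule mult_right_le_imp_le)
  qed
  show "d*y \<le> (1+c)*(1+b) \<Longrightarrow> F12 c d x y \<le> F1 b c x y"
  proof -
    assume h: "d*y \<le> (1+c)*(1+b)"
    have "x*(d*y) \<le> x*((1+c)*(1+b))" using h assms by simp
    then have "F12 c d x y * ((1+x)*(1+y)) \<le> F1 b c x y * ((1+x)*(1+y))"
      unfolding e by (simp add: algebra_simps)
    then show ?thesis using P by (rule mult_right_le_imp_le)
  qed
  show "d*y \<ge> (1+c)*(1+b) \<Longrightarrow> F1 b c x y \<le> F12 c d x y"
  proof -
    assume h: "d*y \<ge> (1+c)*(1+b)"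
    have "x*(d*y) \<ge> x*((1+c)*(1+b))" using h assms by simp
    then have "F1 b c x y * ((1+x)*(1+y)) \<le> F12 c d x y * ((1+x)*(1+y))"
      unfolding e by (simp add: algebra_simps)
    then show ?thesis using P by (rule mult_right_le_imp_le)
  qed
qed

lemma eq_from_mult: "(u::real) * P = v * P \<Longrightarrow> P > 0 \<Longrightarrow> u = v" by simp

lemma reg1:
  fixes a b c d y :: real
  assumes pos: "a > 0" "b > 0" "c > 0" "d > 0" "y > 0"
    and hy: "y*(d*(1+c+d)*(1+a)) < (1+c+d)*(1+a+b)+(1+d)*a*b"
  defines "xs \<equiv> (1+d)*(1+a)/c"
  shows "xs > 0" "F12 c d xs y = F2 a d xs y" "F2 a d xs y \<le> F0 a b xs y"
proof -
  show xp: "xs > 0" unfolding xs_def using pos by simp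
  have cx: "c*xs = (1+d)*(1+a)" unfolding xs_def using pos by simp
  have h12: "(1+c+d)*xs*y = (1+d)*(1+xs+a)*y"
  proof -
    have "c*xs*y = (1+d)*(1+a)*y" using cx by simp
    then show ?thesis by (simp add: algebra_simps)
  qed
  show "F12 c d xs y = F2 a d xs y"
  proof (rule eq_from_mult[of _ "(1+xs)*(1+y)"])
    show "0 < (1+xs)*(1+y)" using xp pos by simp
    show "F12 c d xs y * ((1+xs)*(1+y)) = F2 a d xs y * ((1+xs)*(1+y))"
      unfolding F_mult[OF xp pos(5)] by (fact h12)
  qed
  have e1: "c*(1+xs+a) = (1+a)*(1+c+d)" using cx by (simp add: algebra_simps)
  have e2: "c*(1+xs) = c+(1+d)*(1+a)" using cx by (simp add: algebra_simps)
  have "c*((1+xs+a)*(d*y-1) - b*(1+xs)) = (c*(1+xs+a))*(d*y-1) - b*(c*(1+xs))"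
    by (simp add: algebra_simps)
  also have "\<dots> = y*(d*(1+c+d)*(1+a)) - ((1+c+d)*(1+a+b)+(1+d)*a*b)"
    unfolding e1 e2 by (simp add: algebra_simps)
  finally have "c*((1+xs+a)*(d*y-1) - b*(1+xs)) = y*(d*(1+c+d)*(1+a)) - ((1+c+d)*(1+a+b)+(1+d)*a*b)" .
  then have "c*((1+xs+a)*(d*y-1) - b*(1+xs)) < 0" using hy by simp
  then have "(1+xs+a)*(d*y-1) - b*(1+xs) \<le> 0" using pos by (simp add: mult_less_0_iff)
  then show "F2 a d xs y \<le> F0 a b xs y" using F_cmp(1)[OF xp pos(5)] by blast
qed

lemma reg2:
  fixes a b c d y :: real
  assumes pos: "a > 0" "b > 0" "c > 0" "d > 0" "y > 0"
    and hy: "y*(d*(1+c+d)*(1+a)) \<ge> (1+c+d)*(1+a+b)+(1+d)*a*b"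
  defines "M \<equiv> (c+d)*y - (1+b)" and "N \<equiv> (1+a)*y + (1+a+b)"
  defines "xs \<equiv> N / M"
  shows "M > 0" "xs > 0" "F12 c d xs y = F0 a b xs y" "F0 a b xs y \<le> F2 a d xs y"
proof -
  define K where "K = d*(1+c+d)*(1+a)"
  define num where "num = (1+c+d)*(1+a+b)+(1+d)*a*b"
  have K: "K > 0" unfolding K_def using pos by simp
  have h1: "(c+d)*(y*K) \<ge> (c+d)*num" using hy pos unfolding K_def num_def
    by (intro mult_left_mono) auto
  have h2: "(c+d)*num - (1+b)*K = c*((1+c+d)*(1+a+b)+a*b)" unfolding K_def num_def
    by (simp add: algebra_simps)
  have h3: "c*((1+c+d)*(1+a+b)+a*b) > 0" using pos by (simp add: add_pos_pos)
  have "M*K > 0" unfolding M_def using h1 h2 h3 by (simp add: algebra_simps)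
  then show Mp: "M > 0" using K by (simp add: zero_less_mult_iff)
  have Np: "N > 0" unfolding N_def using pos by (simp add: add_pos_pos)
  show xp: "xs > 0" unfolding xs_def using Mp Np by simp
  have Mx: "M*xs = N" unfolding xs_def using Mp by simp
  have h12: "(1+c+d)*xs*y = (1+xs)*(1+y) + a*(1+y) + b*(1+xs)"
  proof -
    have "M*((1+c+d)*xs*y) = (1+c+d)*(M*xs)*y" by (simp add: algebra_simps)
    also have "\<dots> = (M+M*xs)*(1+y)+a*M*(1+y)+b*(M+M*xs)"
      unfolding Mx by (simp add: M_def N_def algebra_simps)
    also have "\<dots> = M*((1+xs)*(1+y) + a*(1+y) + b*(1+xs))" by (simp add: algebra_simps)
    finally show ?thesis using Mp by simp
  qed
  show "F12 c d xs y = F0 a b xs y"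
  proof (rule eq_from_mult[of _ "(1+xs)*(1+y)"])
    show "0 < (1+xs)*(1+y)" using xp pos by simp
    show "F12 c d xs y * ((1+xs)*(1+y)) = F0 a b xs y * ((1+xs)*(1+y))"
      unfolding F_mult[OF xp pos(5)] by (fact h12)
  qed
  have "M*((1+xs+a)*(d*y-1) - b*(1+xs)) = (M+M*xs+a*M)*(d*y-1) - b*(M+M*xs)"
    by (simp add: algebra_simps)
  also have "\<dots> = y*(y*K - num)"
    unfolding Mx by (simp add: M_def N_def K_def num_def algebra_simps)
  finally have "M*((1+xs+a)*(d*y-1) - b*(1+xs)) = y*(y*K - num)" .
  moreover have "y*(y*K - num) \<ge> 0" using hy pos unfolding K_def num_def by simp
  ultimately have "(1+xs+a)*(d*y-1) - b*(1+xs) \<ge> 0" using Mp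
    by (metis zero_le_mult_iff not_less order.strict_iff_not)
  then show "F0 a b xs y \<le> F2 a d xs y" using F_cmp(2)[OF xp pos(5)] by blast
qed

lemma reg3:
  fixes a b c d y :: real
  assumes pos: "a > 0" "b > 0" "c > 0" "d > 0" "y > 0"
    and hy: "d*y \<ge> (1+c)*(1+b)"
  defines "W \<equiv> c*(y+(1+b))" and "N \<equiv> (1+a)*y + (1+a+b)"
  defines "xs \<equiv> N / W"
  shows "xs > 0" "F1 b c xs y = F0 a b xs y" "F0 a b xs y \<le> F2 a d xs y"
proof -
  have Wp: "W > 0" unfolding W_def using pos by simp
  have Np: "N > 0" unfolding N_def using pos by (simp add: add_pos_pos)
  show xp: "xs > 0" unfolding xs_def using Wp Np by simp
  have Wx: "W*xs = N" unfolding xs_def using Wp by simp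
  have h12: "(1+c)*(1+y+b)*xs = (1+xs)*(1+y) + a*(1+y) + b*(1+xs)"
  proof -
    have "W*((1+c)*(1+y+b)*xs) = (1+c)*(1+y+b)*(W*xs)" by (simp add: algebra_simps)
    also have "\<dots> = (W+W*xs)*(1+y)+a*W*(1+y)+b*(W+W*xs)"
      unfolding Wx by (simp add: W_def N_def algebra_simps)
    also have "\<dots> = W*((1+xs)*(1+y) + a*(1+y) + b*(1+xs))" by (simp add: algebra_simps)
    finally show ?thesis using Wp by simp
  qed
  show "F1 b c xs y = F0 a b xs y"
  proof (rule eq_from_mult[of _ "(1+xs)*(1+y)"])
    show "0 < (1+xs)*(1+y)" using xp pos by simp
    show "F1 b c xs y * ((1+xs)*(1+y)) = F0 a b xs y * ((1+xs)*(1+y))"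
      unfolding F_mult[OF xp pos(5)] by (fact h12)
  qed
  have "W*((1+xs+a)*(d*y-1) - b*(1+xs)) = (W+W*xs+a*W)*(d*y-1) - b*(W+W*xs)"
    by (simp add: algebra_simps)
  also have "\<dots> = ((1+a)*W+N)*(d*y-1) - b*(W+N)"
    unfolding Wx by (simp add: algebra_simps)
  finally have eq: "W*((1+xs+a)*(d*y-1) - b*(1+xs)) = ((1+a)*W+N)*(d*y-1) - b*(W+N)" .
  have t1: "d*y - 1 \<ge> b"
  proof -
    have "(1+c)*(1+b) = 1+b+c+b*c" by (simp add: algebra_simps)
    then show ?thesis using hy pos mult_pos_pos[OF pos(2) pos(3)] by linarith
  qed
  have t2: "(1+a)*W+N \<ge> W+N" using pos Wp by simp
  have "((1+a)*W+N)*(d*y-1) \<ge> (W+N)*b"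
    using t1 t2 Wp Np pos by (intro mult_mono) auto
  then have "W*((1+xs+a)*(d*y-1) - b*(1+xs)) \<ge> 0" unfolding eq by (simp add: algebra_simps)
  then have "(1+xs+a)*(d*y-1) - b*(1+xs) \<ge> 0" using Wp
    by (simp add: zero_le_mult_iff)
  then show "F0 a b xs y \<le> F2 a d xs y" using F_cmp(2)[OF xp pos(5)] by blast
qed

lemma opt_generic:
  fixes m p q :: "real \<Rightarrow> real"
  assumes "s > 0"
   "\<And>x. x>0 \<Longrightarrow> m x \<le> p x" "\<And>x. x>0 \<Longrightarrow> m x \<le> q x"
   "\<And>x. 0<x \<Longrightarrow> x \<le> s \<Longrightarrow> p x \<le> p s" "\<And>x. 0<x \<Longrightarrow> s \<le> x \<Longrightarrow> q x \<le> q s"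
   "p s = q s" "m s = p s"
  shows "\<forall>x>0. m x \<le> m s"
proof (intro allI impI)
  fix x :: real assume x: "x > 0"
  show "m x \<le> m s"
  proof (cases "x \<le> s")
    case True then show ?thesis using assms(2)[OF x] assms(4)[OF x] assms(7) by simp
  next
    case False then show ?thesis using assms(3)[OF x] assms(5)[OF x] assms(6,7) by simp
  qed
qed

theorem lemma1:
  fixes h1 h2 g1 g2 :: real
  assumes "h1 > 0" "h2 > 0" "g1 > 0" "g2 > 0"
  defines "\<delta>1 \<equiv> ((1 + g1\<^sup>2 + g2\<^sup>2) * (1 + h1\<^sup>2 + h2\<^sup>2) + (1 + g2\<^sup>2) * h1\<^sup>2 * h2\<^sup>2)
                  / (g2\<^sup>2 * (1 + g1\<^sup>2 + g2\<^sup>2) * (1 + h1\<^sup>2))"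
      and "\<delta>2 \<equiv> (1 + g1\<^sup>2) * (1 + h2\<^sup>2) / g2\<^sup>2"
  shows "0 < \<delta>1 \<and> \<delta>1 < \<delta>2 \<and>
    (\<forall>D2. 0 < D2 \<and> D2 < \<delta>1 \<longrightarrow>
       qmf_opt h1 h2 g1 g2 D2 ((1 + g2\<^sup>2) * (1 + h1\<^sup>2) / g1\<^sup>2) {{1,2}, {2}}) \<and>
    (\<forall>D2. \<delta>1 \<le> D2 \<and> D2 < \<delta>2 \<longrightarrow>
       qmf_opt h1 h2 g1 g2 D2
         (((1 + h1\<^sup>2) * D2 + (1 + h1\<^sup>2 + h2\<^sup>2)) / ((g1\<^sup>2 + g2\<^sup>2) * D2 - (1 + h2\<^sup>2))) {{1,2}, {}}) \<and>
    (\<forall>D2. \<delta>2 \<le> D2 \<longrightarrow>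
       qmf_opt h1 h2 g1 g2 D2
         (((1 + h1\<^sup>2) * D2 + (1 + h1\<^sup>2 + h2\<^sup>2)) / (g1\<^sup>2 * (D2 + (1 + h2\<^sup>2)))) {{1}, {}})"
proof -
  define a where "a = h1\<^sup>2"
  define b where "b = h2\<^sup>2"
  define c where "c = g1\<^sup>2"
  define d where "d = g2\<^sup>2"
  have pos: "a > 0" "b > 0" "c > 0" "d > 0" unfolding a_def b_def c_def d_def using assms(1-4) by auto
  define K where "K = d*(1+c+d)*(1+a)"
  define num where "num = (1+c+d)*(1+a+b)+(1+d)*a*b"
  have Kp: "K > 0" unfolding K_def using pos by simp
  have nump: "num > 0" unfolding num_def using pos by (simp add: add_pos_pos)
  have d1: "\<delta>1 = num / K" unfolding \<delta>1_def num_def K_def a_def b_def c_def d_def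
    by (simp add: algebra_simps)
  have d2: "\<delta>2 = (1+c)*(1+b)/d" unfolding \<delta>2_def b_def c_def d_def by (simp add: algebra_simps)
  have mR: "\<And>x y. x>0 \<Longrightarrow> y>0 \<Longrightarrow> qmf_minR h1 h2 g1 g2 x y =
      min (min (L (F0 a b x y)) (L (F1 b c x y))) (min (L (F2 a d x y)) (L (F12 c d x y)))"
    unfolding a_def b_def c_def d_def by (rule minR_eq)
  note RR = R_eq[of _ _ h1 h2 g1 g2, folded a_def b_def c_def d_def]
  have Lm: "\<And>t s. 0 < t \<Longrightarrow> t \<le> s \<Longrightarrow> L t \<le> L s" by (rule L_mono)
  note Fp = F_pos[OF less_imp_le[OF pos(1)] less_imp_le[OF pos(2)] less_imp_le[OF pos(3)] less_imp_le[OF pos(4)]]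
  note Fm = F_mono[OF less_imp_le[OF pos(1)] less_imp_le[OF pos(2)] less_imp_le[OF pos(3)] less_imp_le[OF pos(4)]]
  have "0 < \<delta>1" unfolding d1 using Kp nump by simp
  moreover have "\<delta>1 < \<delta>2"
  proof -
    have "\<delta>2 = ((1+c)*(1+b)*(1+c+d)*(1+a)) / K" unfolding d2 K_def using pos by simp
    moreover have "(1+c)*(1+b)*(1+c+d)*(1+a) - num = c*a*b + c*(1+c+d)*(1+a)*(1+b)"
      unfolding num_def by (simp add: algebra_simps)
    moreover have "c*a*b + c*(1+c+d)*(1+a)*(1+b) > 0" using pos by (simp add: add_pos_pos)
    ultimately show ?thesis unfolding d1 using Kp by (simp add: divide_strict_right_mono)
  qed
  moreover have "\<forall>D2. 0 < D2 \<and> D2 < \<delta>1 \<longrightarrow>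
       qmf_opt h1 h2 g1 g2 D2 ((1 + g2\<^sup>2) * (1 + h1\<^sup>2) / g1\<^sup>2) {{1,2}, {2}}"
  proof (intro allI impI)
    fix y assume hy: "0 < y \<and> y < \<delta>1"
    then have y: "y > 0" and yK: "y*K < num" using Kp unfolding d1 by (auto simp: pos_less_divide_eq)
    define xs where "xs = (1+d)*(1+a)/c"
    have xse: "(1 + g2\<^sup>2) * (1 + h1\<^sup>2) / g1\<^sup>2 = xs" unfolding xs_def a_def c_def d_def ..
    have yK': "y*(d*(1+c+d)*(1+a)) < (1+c+d)*(1+a+b)+(1+d)*a*b" using yK unfolding K_def num_def .
    note r = reg1[OF pos y yK', folded xs_def]
    have xp: "xs > 0" by (fact r(1))
    have "d*y \<le> (1+c)*(1+b)"
    proof -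
      have "y < \<delta>2" using hy \<open>\<delta>1 < \<delta>2\<close> by simp
      then show ?thesis unfolding d2 using pos by (simp add: pos_less_divide_eq mult.commute)
    qed
    then have c2: "F12 c d xs y \<le> F1 b c xs y" by (rule F_cmp(3)[OF xp y])
    have ms: "qmf_minR h1 h2 g1 g2 xs y = L (F12 c d xs y)"
      unfolding mR[OF xp y] using Lm[OF Fp(4)[OF xp y] c2] Lm[OF Fp(3)[OF xp y] r(3)] r(2)
      by (simp add: min_def)
    have opt: "\<forall>x>0. qmf_minR h1 h2 g1 g2 x y \<le> qmf_minR h1 h2 g1 g2 xs y"
    proof (rule opt_generic[where p = "\<lambda>x. L (F12 c d x y)" and q = "\<lambda>x. L (F2 a d x y)"])
      show "xs > 0" by (fact xp)
      show "\<And>x. 0 < x \<Longrightarrow> qmf_minR h1 h2 g1 g2 x y \<le> L (F12 c d x y)" using mR y by simp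
      show "\<And>x. 0 < x \<Longrightarrow> qmf_minR h1 h2 g1 g2 x y \<le> L (F2 a d x y)" using mR y by simp
      show "\<And>x. 0 < x \<Longrightarrow> x \<le> xs \<Longrightarrow> L (F12 c d x y) \<le> L (F12 c d xs y)"
        using Lm Fp(4) Fm(2) y by blast
      show "\<And>x. 0 < x \<Longrightarrow> xs \<le> x \<Longrightarrow> L (F2 a d x y) \<le> L (F2 a d xs y)"
        using Lm Fp(3) Fm(4) y xp by (meson order.strict_trans1)
      show "L (F12 c d xs y) = L (F2 a d xs y)" using r(2) by simp
      show "qmf_minR h1 h2 g1 g2 xs y = L (F12 c d xs y)" by (fact ms)
    qed
    show "qmf_opt h1 h2 g1 g2 y ((1 + g2\<^sup>2) * (1 + h1\<^sup>2) / g1\<^sup>2) {{1,2}, {2}}"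
      unfolding xse qmf_opt_def using xp opt ms RR[OF xp y] r(2) by simp
  qed
  moreover have "\<forall>D2. \<delta>1 \<le> D2 \<and> D2 < \<delta>2 \<longrightarrow>
       qmf_opt h1 h2 g1 g2 D2
         (((1 + h1\<^sup>2) * D2 + (1 + h1\<^sup>2 + h2\<^sup>2)) / ((g1\<^sup>2 + g2\<^sup>2) * D2 - (1 + h2\<^sup>2))) {{1,2}, {}}"
  proof (intro allI impI)
    fix y assume hy: "\<delta>1 \<le> y \<and> y < \<delta>2"
    then have yK: "num \<le> y*K" using Kp unfolding d1 by (auto simp: pos_divide_le_eq)
    then have y: "y > 0" using Kp nump by (metis less_le_trans zero_less_mult_pos2 mult.commute)
    define xs where "xs = ((1+a)*y + (1+a+b)) / ((c+d)*y - (1+b))"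
    have xse: "((1 + h1\<^sup>2) * y + (1 + h1\<^sup>2 + h2\<^sup>2)) / ((g1\<^sup>2 + g2\<^sup>2) * y - (1 + h2\<^sup>2)) = xs"
      unfolding xs_def a_def b_def c_def d_def ..
    have yK': "y*(d*(1+c+d)*(1+a)) \<ge> (1+c+d)*(1+a+b)+(1+d)*a*b" using yK unfolding K_def num_def .
    note r = reg2[OF pos y yK', folded xs_def]
    have xp: "xs > 0" by (fact r(2))
    have "d*y \<le> (1+c)*(1+b)"
      using hy unfolding d2 using pos by (simp add: pos_less_divide_eq mult.commute)
    then have c2: "F12 c d xs y \<le> F1 b c xs y" by (rule F_cmp(3)[OF xp y])
    have ms: "qmf_minR h1 h2 g1 g2 xs y = L (F12 c d xs y)"
      unfolding mR[OF xp y] using Lm[OF Fp(4)[OF xp y] c2] Lm[OF Fp(1)[OF xp y] r(4)] r(3)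
      by (simp add: min_def)
    have opt: "\<forall>x>0. qmf_minR h1 h2 g1 g2 x y \<le> qmf_minR h1 h2 g1 g2 xs y"
    proof (rule opt_generic[where p = "\<lambda>x. L (F12 c d x y)" and q = "\<lambda>x. L (F0 a b x y)"])
      show "xs > 0" by (fact xp)
      show "\<And>x. 0 < x \<Longrightarrow> qmf_minR h1 h2 g1 g2 x y \<le> L (F12 c d x y)" using mR y by simp
      show "\<And>x. 0 < x \<Longrightarrow> qmf_minR h1 h2 g1 g2 x y \<le> L (F0 a b x y)" using mR y by simp
      show "\<And>x. 0 < x \<Longrightarrow> x \<le> xs \<Longrightarrow> L (F12 c d x y) \<le> L (F12 c d xs y)"
        using Lm Fp(4) Fm(2) y by blast
      show "\<And>x. 0 < x \<Longrightarrow> xs \<le> x \<Longrightarrow> L (F0 a b x y) \<le> L (F0 a b xs y)"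
        using Lm Fp(1) Fm(3) y xp by (meson order.strict_trans1)
      show "L (F12 c d xs y) = L (F0 a b xs y)" using r(3) by simp
      show "qmf_minR h1 h2 g1 g2 xs y = L (F12 c d xs y)" by (fact ms)
    qed
    show "qmf_opt h1 h2 g1 g2 y
         (((1 + h1\<^sup>2) * y + (1 + h1\<^sup>2 + h2\<^sup>2)) / ((g1\<^sup>2 + g2\<^sup>2) * y - (1 + h2\<^sup>2))) {{1,2}, {}}"
      unfolding xse qmf_opt_def using xp opt ms RR[OF xp y] r(3) by simp
  qed
  moreover have "\<forall>D2. \<delta>2 \<le> D2 \<longrightarrow>
       qmf_opt h1 h2 g1 g2 D2
         (((1 + h1\<^sup>2) * D2 + (1 + h1\<^sup>2 + h2\<^sup>2)) / (g1\<^sup>2 * (D2 + (1 + h2\<^sup>2)))) {{1}, {}}"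
  proof (intro allI impI)
    fix y assume hy: "\<delta>2 \<le> y"
    then have yd: "(1+c)*(1+b) \<le> d*y" unfolding d2 using pos by (simp add: pos_divide_le_eq mult.commute)
    have y: "y > 0"
    proof -
      have "(1+c)*(1+b) > 0" using pos by simp
      then show ?thesis using yd pos by (metis less_le_trans zero_less_mult_iff not_less_iff_gr_or_eq)
    qed
    define xs where "xs = ((1+a)*y + (1+a+b)) / (c*(y+(1+b)))"
    have xse: "((1 + h1\<^sup>2) * y + (1 + h1\<^sup>2 + h2\<^sup>2)) / (g1\<^sup>2 * (y + (1 + h2\<^sup>2))) = xs"
      unfolding xs_def a_def b_def c_def d_def ..
    note r = reg3[OF pos y yd, folded xs_def]
    have xp: "xs > 0" by (fact r(1))
    have c2: "F1 b c xs y \<le> F12 c d xs y" using yd by (rule F_cmp(4)[OF xp y])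
    have ms: "qmf_minR h1 h2 g1 g2 xs y = L (F1 b c xs y)"
      unfolding mR[OF xp y] using Lm[OF Fp(2)[OF xp y] c2] Lm[OF Fp(1)[OF xp y] r(3)] r(2)
      by (simp add: min_def)
    have opt: "\<forall>x>0. qmf_minR h1 h2 g1 g2 x y \<le> qmf_minR h1 h2 g1 g2 xs y"
    proof (rule opt_generic[where p = "\<lambda>x. L (F1 b c x y)" and q = "\<lambda>x. L (F0 a b x y)"])
      show "xs > 0" by (fact xp)
      show "\<And>x. 0 < x \<Longrightarrow> qmf_minR h1 h2 g1 g2 x y \<le> L (F1 b c x y)" using mR y by simp
      show "\<And>x. 0 < x \<Longrightarrow> qmf_minR h1 h2 g1 g2 x y \<le> L (F0 a b x y)" using mR y by simp
      show "\<And>x. 0 < x \<Longrightarrow> x \<le> xs \<Longrightarrow> L (F1 b c x y) \<le> L (F1 b c xs y)"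
        using Lm Fp(2) Fm(1) y by blast
      show "\<And>x. 0 < x \<Longrightarrow> xs \<le> x \<Longrightarrow> L (F0 a b x y) \<le> L (F0 a b xs y)"
        using Lm Fp(1) Fm(3) y xp by (meson order.strict_trans1)
      show "L (F1 b c xs y) = L (F0 a b xs y)" using r(2) by simp
      show "qmf_minR h1 h2 g1 g2 xs y = L (F1 b c xs y)" by (fact ms)
    qed
    show "qmf_opt h1 h2 g1 g2 y
         (((1 + h1\<^sup>2) * y + (1 + h1\<^sup>2 + h2\<^sup>2)) / (g1\<^sup>2 * (y + (1 + h2\<^sup>2)))) {{1}, {}}"
      unfolding xse qmf_opt_def using xp opt ms RR[OF xp y] r(2) by simp
  qed
  ultimately show ?thesis by blast
qed

end
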